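(* Let $(G,\tau,\oplus)$ be a topological gyrogroup and let $G^{\bullet}$ be the gyrogroup of step functions defined in the context. Then the family $\{O(V,\varepsilon): V \text{ an open neighbourhood of } 0 \text{ in } G,\ \varepsilon>0\}$ is a local base at the identity $\mathbf{0}^{\bullet}$ of a topology on $G^{\bullet}$ which makes $(G^{\bullet},\oplus^{\bullet})$ a Hausdorff topological gyrogroup; in this topology, for each $f\in G^{\bullet}$ the sets $f\oplus^{\bullet}O(V,\varepsilon)$ form a local base at $f$.
   Context: A gyrogroup is a set $G$ with a binary operation $\oplus$ such that: (G1) there is a unique identity $0$ with $0\oplus a=a=a\oplus 0$; (G2) each $x$ has a unique inverse $\ominus x$ with $\ominus x\oplus x=0=x\oplus(\ominus x)$; (G3) for all $x,y$ there is an automorphism $\mathrm{gyr}[x,y]$ of $(G,\oplus)$ with $x\oplus(y\oplus z)=(x\oplus y)\oplus \mathrm{gyr}[x,y](z)$ for all $z$; (G4) $\mathrm{gyr}[x\oplus y,y]=\mathrm{gyr}[x,y]$. A topological gyrogroup is a gyrogroup with a topology (all spaces are assumed $T_1$) such that $\oplus:G\times G\to G$ is jointly continuous and $x\mapsto\ominus x$ is continuous. Construction: let $J=[0,1)$ and let $G^{\bullet}$ be the set of all functions $f:J\to G$ for which there exist $0=a_0<a_1<\dots<a_n=1$ with $f$ constant on each $[a_k,a_{k+1})$. Define $(f\oplus^{\bullet}g)(r)=f(r)\oplus g(r)$; then $(G^{\bullet},\oplus^{\bullet})$ is a gyrogroup with identity $\mathbf{0}^{\bullet}$ (the constant function $0$),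 inverse $(\ominus^{\bullet}f)(r)=\ominus f(r)$, and gyrations $\mathrm{gyr}[f,g](h)(r)=\mathrm{gyr}[f(r),g(r)](h(r))$. For an open neighbourhood $V$ of $0$ in $G$ and $\varepsilon>0$ let $O(V,\varepsilon)=\{f\in G^{\bullet}:\mu(\{r\in J: f(r)\notin V\})<\varepsilon\}$, where $\mu$ is Lebesgue measure. *)

theory Defs
  imports "HOL-Analysis.Analysis"
begin

definition gyro_aut :: "'a set \<Rightarrow> ('a \<Rightarrow> 'a \<Rightarrow> 'a) \<Rightarrow> ('a \<Rightarrow> 'a) \<Rightarrow> bool" where
  "gyro_aut G op \<phi> \<longleftrightarrow> bij_betw \<phi> G G \<and> (\<forall>a\<in>G. \<forall>b\<in>G. \<phi> (op a b) = op (\<phi> a) (\<phi> b))"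

definition gyrogroup :: "'a set \<Rightarrow> ('a \<Rightarrow> 'a \<Rightarrow> 'a) \<Rightarrow> bool" where
  "gyrogroup G op \<longleftrightarrow>
     (\<forall>x\<in>G. \<forall>y\<in>G. op x y \<in> G) \<and>
     (\<exists>!e. e \<in> G \<and> (\<forall>a\<in>G. op e a = a \<and> op a e = a)) \<and>
     (\<forall>e\<in>G. (\<forall>a\<in>G. op e a = a \<and> op a e = a) \<longrightarrow>
        (\<forall>x\<in>G. \<exists>!y. y \<in> G \<and> op y x = e \<and> op x y = e)) \<and>
     (\<exists>gyr. (\<forall>x\<in>G. \<forall>y\<in>G. gyro_aut G op (gyr x y)) \<and>
            (\<forall>x\<in>G. \<forall>y\<in>G. \<forall>z\<in>G. op x (op y z) = op (op x y) (gyr x y z)) \<and>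
            (\<forall>x\<in>G. \<forall>y\<in>G. \<forall>z\<in>G. gyr (op x y) y z = gyr x y z))"

definition gzero :: "'a set \<Rightarrow> ('a \<Rightarrow> 'a \<Rightarrow> 'a) \<Rightarrow> 'a" where
  "gzero G op = (THE e. e \<in> G \<and> (\<forall>a\<in>G. op e a = a \<and> op a e = a))"

definition ginv :: "'a set \<Rightarrow> ('a \<Rightarrow> 'a \<Rightarrow> 'a) \<Rightarrow> 'a \<Rightarrow> 'a" where
  "ginv G op x = (THE y. y \<in> G \<and> op y x = gzero G op \<and> op x y = gzero G op)"

definition topological_gyrogroup :: "'a topology \<Rightarrow> ('a \<Rightarrow> 'a \<Rightarrow> 'a) \<Rightarrow> bool" where
  "topological_gyrogroup T op \<longleftrightarrow>
     gyrogroup (topspace T) op \<and> t1_space T \<and>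
     continuous_map (prod_topology T T) T (\<lambda>(x, y). op x y) \<and>
     continuous_map T T (ginv (topspace T) op)"

definition local_base_at :: "'a topology \<Rightarrow> 'a set set \<Rightarrow> 'a \<Rightarrow> bool" where
  "local_base_at T \<B> x \<longleftrightarrow>
     (\<forall>B\<in>\<B>. openin T B \<and> x \<in> B) \<and>
     (\<forall>U. openin T U \<and> x \<in> U \<longrightarrow> (\<exists>B\<in>\<B>. B \<subseteq> U))"

text \<open>Elements of G-bullet are functions J = [0,1) \<rightarrow> G, represented as functions real \<Rightarrow> 'a
  that take the value 0 (identity of G) outside J.\<close>
definition stepfuns :: "'a set \<Rightarrow> ('a \<Rightarrow> 'a \<Rightarrow> 'a) \<Rightarrow> (real \<Rightarrow> 'a) set" where
  "stepfuns G op = {f. (\<forall>r. r \<notin> {0..<1} \<longrightarrow> f r = gzero G op) \<and>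
     (\<exists>(a::nat \<Rightarrow> real) n. a 0 = 0 \<and> a n = 1 \<and> (\<forall>k<n. a k < a (Suc k)) \<and>
        (\<forall>k<n. \<exists>c\<in>G. \<forall>r\<in>{a k..<a (Suc k)}. f r = c))}"

definition stepop :: "('a \<Rightarrow> 'a \<Rightarrow> 'a) \<Rightarrow> (real \<Rightarrow> 'a) \<Rightarrow> (real \<Rightarrow> 'a) \<Rightarrow> (real \<Rightarrow> 'a)" where
  "stepop op f g = (\<lambda>r. op (f r) (g r))"

definition Onbhd :: "'a set \<Rightarrow> ('a \<Rightarrow> 'a \<Rightarrow> 'a) \<Rightarrow> 'a set \<Rightarrow> real \<Rightarrow> (real \<Rightarrow> 'a) set" where
  "Onbhd G op V \<epsilon> = {f \<in> stepfuns G op. measure lebesgue {r \<in> {0..<1}. f r \<notin> V} < \<epsilon>}"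

end

theory Submission
  imports Defs
begin

lemma arr_mono:
  assumes "\<forall>k<n. (a::nat\<Rightarrow>real) k < a (Suc k)" "i \<le> j" "j \<le> n"
  shows "a i \<le> a j"
  using assms(2,3)
proof (induction j)
  case 0 then show ?case by simp
next
  case (Suc j)
  show ?case
  proof (cases "i = Suc j")
    case False
    then have "i \<le> j" using Suc.prems by simp
    then have "a i \<le> a j" using Suc by simp
    also have "\<dots> < a (Suc j)" using assms(1) Suc.prems by simp
    finally show ?thesis by simp
  qed simp
qed

lemma arr_strict:
  assumes "\<forall>k<n. (a::nat\<Rightarrow>real) k < a (Suc k)" "i < j" "j \<le> n"
  shows "a i < a j"
proof -
  have "a i < a (Suc i)" using assms by simp
  also have "\<dots> \<le> a j" using arr_mono[OF assms(1)] assms by simp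
  finally show ?thesis .
qed

lemma stepfuns_arr:
  assumes "f \<in> stepfuns G op"
  obtains a n where "a 0 = 0" "a n = 1" "\<forall>k<n. a k < a (Suc k)" "\<forall>k<n. f (a k) \<in> G"
    "\<forall>r\<in>{0..<1}. \<exists>k<n. a k \<le> r \<and> r < a (Suc k) \<and> f r = f (a k)"
    "\<forall>k\<le>n. 0 \<le> a k \<and> a k \<le> 1"
    "\<forall>k<n. \<forall>r\<in>{a k..<a (Suc k)}. f r = f (a k)"
proof -
  from assms obtain a n where a0: "a 0 = 0" and an: "a n = 1" and inc: "\<forall>k<n. a k < a (Suc k)"
    and c: "\<forall>k<n. \<exists>c\<in>G. \<forall>r\<in>{a k..<a (Suc k)}. f r = c"
    unfolding stepfuns_def by blast
  have bnd: "\<forall>k\<le>n. 0 \<le> a k \<and> a k \<le> 1"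
    using arr_mono[OF inc, of 0] arr_mono[OF inc, of _ n] a0 an by auto
  have cov: "\<exists>k<n. a k \<le> r \<and> r < a (Suc k)" if r: "r \<in> {0..<1}" for r
  proof -
    define K where "K = {k. k \<le> n \<and> a k \<le> r}"
    have fin: "finite K" unfolding K_def by simp
    have "0 \<in> K" using r a0 unfolding K_def by simp
    define k where "k = Max K"
    have kK: "k \<in> K" using Max_in[OF fin] \<open>0 \<in> K\<close> unfolding k_def by blast
    have "k \<noteq> n" using kK r an unfolding K_def by auto
    then have kn: "k < n" using kK unfolding K_def by simp
    have "\<not> a (Suc k) \<le> r"
    proof
      assume "a (Suc k) \<le> r"
      then have "Suc k \<in> K" using kn unfolding K_def by simp
      then have "Suc k \<le> k" unfolding k_def using fin by simp
      then show False by simp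
    qed
    then show ?thesis using kn kK unfolding K_def by auto
  qed
  have vals: "\<forall>k<n. f (a k) \<in> G \<and> (\<forall>r\<in>{a k..<a (Suc k)}. f r = f (a k))"
  proof (intro allI impI)
    fix k assume "k < n"
    then obtain cc where "cc \<in> G" "\<forall>r\<in>{a k..<a (Suc k)}. f r = cc" using c by blast
    moreover have "a k \<in> {a k..<a (Suc k)}" using inc \<open>k<n\<close> by simp
    ultimately show "f (a k) \<in> G \<and> (\<forall>r\<in>{a k..<a (Suc k)}. f r = f (a k))" by simp
  qed
  show ?thesis
  proof (rule that[OF a0 an inc])
    show "\<forall>k<n. f (a k) \<in> G" using vals by blast
    show "\<forall>r\<in>{0..<1}. \<exists>k<n. a k \<le> r \<and> r < a (Suc k) \<and> f r = f (a k)"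
    proof
      fix r :: real assume "r \<in> {0..<1}"
      then obtain k where k: "k<n" "a k \<le> r" "r < a (Suc k)" using cov by blast
      then have "r \<in> {a k..<a (Suc k)}" by simp
      then have "f r = f (a k)" using vals k(1) by blast
      then show "\<exists>k<n. a k \<le> r \<and> r < a (Suc k) \<and> f r = f (a k)" using k by blast
    qed
  qed (use bnd vals in blast)+
qed

lemma stepfuns_out: "f \<in> stepfuns G op \<Longrightarrow> r \<notin> {0..<1} \<Longrightarrow> f r = gzero G op"
  unfolding stepfuns_def by blast

lemma stepfuns_in: assumes "f \<in> stepfuns G op" "r \<in> {0..<1}" shows "f r \<in> G"
proof -
  obtain a n where a0: "a 0 = 0" and an: "a n = 1" and inc: "\<forall>k<n. a k < a (Suc k)" and inG: "\<forall>k<n. f (a k) \<in> G"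
    and cov: "\<forall>r\<in>{0..<1}. \<exists>k<n. a k \<le> r \<and> r < a (Suc k) \<and> f r = f (a k)"
    and bnd: "\<forall>k\<le>n. 0 \<le> a k \<and> a k \<le> 1"
    and vals: "\<forall>k<n. \<forall>r\<in>{a k..<a (Suc k)}. f r = f (a k)"
    by (rule stepfuns_arr[OF assms(1)])
  obtain k where "k<n" "f r = f (a k)" using cov assms(2) by blast
  then show ?thesis using inG by simp
qed

lemma stepfuns_finite_img: assumes "f \<in> stepfuns G op" shows "finite (f ` {0..<1})"
proof -
  obtain a n where a0: "a 0 = 0" and an: "a n = 1" and inc: "\<forall>k<n. a k < a (Suc k)" and inG: "\<forall>k<n. f (a k) \<in> G"
    and cov: "\<forall>r\<in>{0..<1}. \<exists>k<n. a k \<le> r \<and> r < a (Suc k) \<and> f r = f (a k)"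
    and bnd: "\<forall>k\<le>n. 0 \<le> a k \<and> a k \<le> 1"
    and vals: "\<forall>k<n. \<forall>r\<in>{a k..<a (Suc k)}. f r = f (a k)"
    by (rule stepfuns_arr[OF assms(1)])
  have "f ` {0..<1} \<subseteq> (\<lambda>k. f (a k)) ` {..<n}" using cov by fastforce
  then show ?thesis by (rule finite_subset) simp
qed

lemma stepfuns_meas: assumes "f \<in> stepfuns G op" shows "{r\<in>{0..<1}. Q (f r)} \<in> lmeasurable"
proof -
  obtain a n where a0: "a 0 = 0" and an: "a n = 1" and inc: "\<forall>k<n. a k < a (Suc k)" and inG: "\<forall>k<n. f (a k) \<in> G"
    and cov: "\<forall>r\<in>{0..<1}. \<exists>k<n. a k \<le> r \<and> r < a (Suc k) \<and> f r = f (a k)"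
    and bnd: "\<forall>k\<le>n. 0 \<le> a k \<and> a k \<le> 1"
    and vals: "\<forall>k<n. \<forall>r\<in>{a k..<a (Suc k)}. f r = f (a k)"
    by (rule stepfuns_arr[OF assms(1)])
  have eq: "{r\<in>{0..<1}. Q (f r)} = (\<Union>k\<in>{k. k<n \<and> Q (f (a k))}. {a k..<a (Suc k)})"
  proof (intro equalityI subsetI)
    fix r assume "r \<in> {r\<in>{0..<1}. Q (f r)}"
    then show "r \<in> (\<Union>k\<in>{k. k<n \<and> Q (f (a k))}. {a k..<a (Suc k)})"
      using cov by fastforce
  next
    fix r assume "r \<in> (\<Union>k\<in>{k. k<n \<and> Q (f (a k))}. {a k..<a (Suc k)})"
    then obtain k where k: "k < n" "Q (f (a k))" "a k \<le> r" "r < a (Suc k)" by auto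
    have "0 \<le> a k" "a (Suc k) \<le> 1" using bnd k(1) by auto
    moreover have "f r = f (a k)" using vals k(1) k(3,4) atLeastLessThan_iff by blast
    ultimately show "r \<in> {r\<in>{0..<1}. Q (f r)}" using k by auto
  qed
  show ?thesis unfolding eq
    by (intro fmeasurable.finite_UN) (auto intro!: bounded_set_imp_lmeasurable)
qed

lemma lmeas_Ico: "measure lebesgue {a..<b} = (if a \<le> b then b - a else 0::real)"
  by simp

lemma stepfuns_pos:
  assumes "f \<in> stepfuns G op" "r0 \<in> {0..<1}" "Q (f r0)"
  shows "measure lebesgue {r\<in>{0..<1}. Q (f r)} > 0"
proof -
  obtain a n where a0: "a 0 = 0" and an: "a n = 1" and inc: "\<forall>k<n. a k < a (Suc k)" and inG: "\<forall>k<n. f (a k) \<in> G"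
    and cov: "\<forall>r\<in>{0..<1}. \<exists>k<n. a k \<le> r \<and> r < a (Suc k) \<and> f r = f (a k)"
    and bnd: "\<forall>k\<le>n. 0 \<le> a k \<and> a k \<le> 1"
    and vals: "\<forall>k<n. \<forall>r\<in>{a k..<a (Suc k)}. f r = f (a k)"
    by (rule stepfuns_arr[OF assms(1)])
  obtain k where k: "k<n" "a k \<le> r0" "r0 < a (Suc k)" "f r0 = f (a k)" using cov assms(2) by blast
  have sub: "{a k..<a (Suc k)} \<subseteq> {r\<in>{0..<1}. Q (f r)}"
  proof
    fix r assume r: "r \<in> {a k..<a (Suc k)}"
    have "0 \<le> a k" "a (Suc k) \<le> 1" using bnd k(1) by auto
    moreover have "f r = f (a k)" using vals k(1) r by blast
    ultimately show "r \<in> {r\<in>{0..<1}. Q (f r)}" using r k assms(3) by auto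
  qed
  have "0 < a (Suc k) - a k" using inc k by simp
  also have "\<dots> = measure lebesgue {a k..<a (Suc k)}" using inc k by (simp add: lmeas_Ico)
  also have "\<dots> \<le> measure lebesgue {r\<in>{0..<1}. Q (f r)}"
    by (rule measure_mono_fmeasurable[OF sub _ stepfuns_meas[OF assms(1)]]) simp
  finally show ?thesis .
qed


definition brk :: "real set \<Rightarrow> (real \<Rightarrow> 'a) \<Rightarrow> bool" where
  "brk P f \<longleftrightarrow> finite P \<and> (\<forall>r s. 0 \<le> r \<longrightarrow> r \<le> s \<longrightarrow> s < 1 \<longrightarrow> (\<forall>p\<in>P. \<not> (r < p \<and> p \<le> s)) \<longrightarrow> f r = f s)"

lemma stepfuns_brk:
  assumes "f \<in> stepfuns G op"
  shows "\<exists>P. brk P f"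
proof -
  obtain a n where a0: "a 0 = 0" and an: "a n = 1" and inc: "\<forall>k<n. a k < a (Suc k)" and inG: "\<forall>k<n. f (a k) \<in> G"
    and cov: "\<forall>r\<in>{0..<1}. \<exists>k<n. a k \<le> r \<and> r < a (Suc k) \<and> f r = f (a k)"
    and bnd: "\<forall>k\<le>n. 0 \<le> a k \<and> a k \<le> 1"
    and vals: "\<forall>k<n. \<forall>r\<in>{a k..<a (Suc k)}. f r = f (a k)"
    by (rule stepfuns_arr[OF assms(1)])
  have "brk (a ` {..n}) f"
    unfolding brk_def
  proof (intro conjI allI impI)
    fix r s :: real
    assume r: "0 \<le> r" "r \<le> s" "s < 1" and np: "\<forall>p\<in>a ` {..n}. \<not> (r < p \<and> p \<le> s)"
    have "r \<in> {0..<1}" using r by simp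
    then obtain k where k: "k<n" "a k \<le> r" "r < a (Suc k)" "f r = f (a k)" using cov by blast
    have "\<not> a (Suc k) \<le> s"
    proof
      assume "a (Suc k) \<le> s"
      moreover have "a (Suc k) \<in> a ` {..n}" using k(1) by simp
      ultimately show False using np k(3) by blast
    qed
    then have "s \<in> {a k..<a (Suc k)}" using k r by simp
    then have "f s = f (a k)" using vals k(1) by blast
    then show "f r = f s" using k(4) by simp
  qed simp
  then show ?thesis by blast
qed

lemma ss_less:
  assumes "sorted_wrt (<) (L::real list)" "i < length L" "j < length L"
  shows "L ! i < L ! j \<longleftrightarrow> i < j"
proof
  assume "L ! i < L ! j"
  show "i < j"
  proof (rule ccontr)
    assume "\<not> i < j"
    then have "j = i \<or> j < i" by auto
    then show False
    proof
      assume "j < i" then have "L ! j < L ! i" using sorted_wrt_nth_less assms by blast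
      then show False using \<open>L ! i < L ! j\<close> by simp
    qed (use \<open>L ! i < L ! j\<close> in simp)
  qed
qed (use sorted_wrt_nth_less assms in blast)

lemma brk_stepfuns:
  assumes b: "brk P f" and out: "\<forall>r. r \<notin> {0..<1} \<longrightarrow> f r = gzero G op"
    and inG: "\<forall>r\<in>{0..<1}. f r \<in> G"
  shows "f \<in> stepfuns G op"
proof -
  define Q where "Q = insert 0 (insert 1 (P \<inter> {0<..<1::real}))"
  define L where "L = sorted_list_of_set Q"
  have finP: "finite P" using b unfolding brk_def by simp
  have finQ: "finite Q" unfolding Q_def using finP by simp
  have setL: "set L = Q" unfolding L_def using finQ by simp
  have sL: "sorted_wrt (<) L" unfolding L_def by simp
  have Q01: "\<forall>q\<in>Q. 0 \<le> q \<and> q \<le> 1" unfolding Q_def by auto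
  have dist: "distinct L" using sL strict_sorted_iff by blast
  have "card Q \<ge> 2" unfolding Q_def using finP by (simp add: card_insert_if)
  then have lenL: "length L \<ge> 2" using distinct_card[OF dist] setL by simp
  define n where "n = length L - 1"
  define a where "a = (\<lambda>k. L ! k)"
  have nl: "n < length L" "Suc n = length L" unfolding n_def using lenL by auto
  have aQ: "k \<le> n \<Longrightarrow> a k \<in> Q" for k unfolding a_def using nl setL by (metis le_imp_less_Suc nth_mem)
  have inc: "\<forall>k<n. a k < a (Suc k)"
    unfolding a_def using sorted_wrt_nth_less[OF sL] nl by simp
  have a0: "a 0 = 0"
  proof -
    have "0 \<in> set L" using setL unfolding Q_def by simp
    then obtain j where j: "j < length L" "L ! j = 0" by (metis in_set_conv_nth)
    show ?thesis
    proof (rule ccontr)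
      assume "a 0 \<noteq> 0"
      then have "j \<noteq> 0" using j unfolding a_def by (metis)
      moreover have "0 < length L" using j(1) by linarith
      ultimately have "L ! 0 < L ! j" using ss_less[OF sL, of 0 j] j by simp
      moreover have "L ! 0 \<ge> 0" using aQ[of 0] Q01 unfolding a_def by auto
      ultimately show False using j by simp
    qed
  qed
  have an: "a n = 1"
  proof -
    have "1 \<in> set L" using setL unfolding Q_def by simp
    then obtain j where j: "j < length L" "L ! j = 1" by (metis in_set_conv_nth)
    show ?thesis
    proof (rule ccontr)
      assume "a n \<noteq> 1"
      then have "j \<noteq> n" using j unfolding a_def by (metis)
      then have "j < n" using j nl by simp
      then have "L ! j < L ! n" using ss_less[OF sL, of j n] j nl by simp
      moreover have "L ! n \<le> 1" using aQ[of n] Q01 unfolding a_def by auto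
      ultimately show False using j by simp
    qed
  qed
  have pieces: "\<forall>k<n. \<exists>c\<in>G. \<forall>r\<in>{a k..<a (Suc k)}. f r = c"
  proof (intro allI impI)
    fix k assume kn: "k < n"
    have ak: "0 \<le> a k" "a (Suc k) \<le> 1" using aQ[of k] aQ[of "Suc k"] kn Q01 by auto
    have akr: "a k \<in> {0..<1}" using ak inc kn by auto
    have "\<forall>r\<in>{a k..<a (Suc k)}. f r = f (a k)"
    proof
      fix r assume r: "r \<in> {a k..<a (Suc k)}"
      have "\<forall>p\<in>P. \<not> (a k < p \<and> p \<le> r)"
      proof (intro ballI notI)
        fix p assume p: "p \<in> P" "a k < p \<and> p \<le> r"
        then have "p \<in> Q" using ak r unfolding Q_def by auto
        then obtain j where j: "j < length L" "L ! j = p" using setL by (metis in_set_conv_nth)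
        have "k < j" using ss_less[OF sL, of k j] j p nl kn unfolding a_def by simp
        then have "Suc k = j \<or> Suc k < j" by auto
        then have "a (Suc k) \<le> p"
        proof
          assume "Suc k < j" then show ?thesis using ss_less[OF sL, of "Suc k" j] j nl kn unfolding a_def by simp
        qed (use j in \<open>simp add: a_def\<close>)
        then show False using p r by simp
      qed
      then have "f (a k) = f r" using b ak r unfolding brk_def by auto
      then show "f r = f (a k)" by simp
    qed
    moreover have "f (a k) \<in> G" using inG akr by blast
    ultimately show "\<exists>c\<in>G. \<forall>r\<in>{a k..<a (Suc k)}. f r = c" by blast
  qed
  show ?thesis unfolding stepfuns_def using out a0 an inc pieces by blast
qed

lemma brk_comb: "brk P f \<Longrightarrow> brk Q g \<Longrightarrow> brk R h \<Longrightarrow> brk (P \<union> Q \<union> R) (\<lambda>r. F (f r) (g r) (h r))"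
  unfolding brk_def by (metis UnCI finite_UnI)

lemma step_comb3:
  assumes "f \<in> stepfuns G op" "g \<in> stepfuns G op" "h \<in> stepfuns G op"
    and "\<forall>x\<in>G. \<forall>y\<in>G. \<forall>w\<in>G. F x y w \<in> G"
    and "F (gzero G op) (gzero G op) (gzero G op) = gzero G op"
  shows "(\<lambda>r. F (f r) (g r) (h r)) \<in> stepfuns G op"
proof -
  obtain P Q R where "brk P f" "brk Q g" "brk R h" using stepfuns_brk assms(1-3) by metis
  then have b: "brk (P \<union> Q \<union> R) (\<lambda>r. F (f r) (g r) (h r))" by (rule brk_comb)
  show ?thesis
  proof (rule brk_stepfuns[OF b])
    show "\<forall>r. r \<notin> {0..<1} \<longrightarrow> F (f r) (g r) (h r) = gzero G op"
      using stepfuns_out assms(1-3,5) by metis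
    show "\<forall>r\<in>{0..<1}. F (f r) (g r) (h r) \<in> G"
      using stepfuns_in assms(1-4) by metis
  qed
qed

lemma step_comb2:
  assumes "f \<in> stepfuns G op" "g \<in> stepfuns G op"
    and "\<forall>x\<in>G. \<forall>y\<in>G. F x y \<in> G"
    and "F (gzero G op) (gzero G op) = gzero G op"
  shows "(\<lambda>r. F (f r) (g r)) \<in> stepfuns G op"
  using step_comb3[OF assms(1,2,2), of "\<lambda>x y w. F x y"] assms(3,4) by simp

lemma step_comb1:
  assumes "f \<in> stepfuns G op"
    and "\<forall>x\<in>G. F x \<in> G"
    and "F (gzero G op) = gzero G op"
  shows "(\<lambda>r. F (f r)) \<in> stepfuns G op"
  using step_comb3[OF assms(1,1,1), of "\<lambda>x y w. F x"] assms(2,3) by simp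

lemma step_const: "gzero G op \<in> G \<Longrightarrow> (\<lambda>r. gzero G op) \<in> stepfuns G op"
  by (rule brk_stepfuns[of "{}"]) (auto simp: brk_def)


locale gg =
  fixes G :: "'a set" and op :: "'a \<Rightarrow> 'a \<Rightarrow> 'a"
  assumes gg: "gyrogroup G op"
begin

abbreviation "z \<equiv> gzero G op"
abbreviation "iv \<equiv> ginv G op"

lemmas GG = gg[unfolded gyrogroup_def]

lemma closed: "x \<in> G \<Longrightarrow> y \<in> G \<Longrightarrow> op x y \<in> G"
  using conjunct1[OF GG] by blast

lemma ex1_zero: "\<exists>!e. e \<in> G \<and> (\<forall>a\<in>G. op e a = a \<and> op a e = a)"
  by (rule conjunct1[OF conjunct2[OF GG]])

lemma zero: "z \<in> G \<and> (\<forall>a\<in>G. op z a = a \<and> op a z = a)"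
  unfolding gzero_def by (rule theI'[OF ex1_zero])

lemma z_in: "z \<in> G" and zl: "a \<in> G \<Longrightarrow> op z a = a" and zr: "a \<in> G \<Longrightarrow> op a z = a"
  using zero by auto

lemma ex1_inv: "x \<in> G \<Longrightarrow> \<exists>!y. y \<in> G \<and> op y x = z \<and> op x y = z"
  by (rule conjunct1[OF conjunct2[OF conjunct2[OF GG]], rule_format, OF conjunct1[OF zero]])
    (use zero in auto)

lemma inv: "x \<in> G \<Longrightarrow> iv x \<in> G \<and> op (iv x) x = z \<and> op x (iv x) = z"
  unfolding ginv_def by (rule theI'[OF ex1_inv])

lemma iv_in: "x \<in> G \<Longrightarrow> iv x \<in> G" and ivl: "x \<in> G \<Longrightarrow> op (iv x) x = z"
  and ivr: "x \<in> G \<Longrightarrow> op x (iv x) = z"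
  using inv by auto

lemma inv_unique: "x \<in> G \<Longrightarrow> y \<in> G \<Longrightarrow> op y x = z \<Longrightarrow> op x y = z \<Longrightarrow> iv x = y"
  unfolding ginv_def by (rule the1_equality[OF ex1_inv]) auto

definition gy where
  "gy = (SOME gyr. (\<forall>x\<in>G. \<forall>y\<in>G. gyro_aut G op (gyr x y)) \<and>
            (\<forall>x\<in>G. \<forall>y\<in>G. \<forall>w\<in>G. op x (op y w) = op (op x y) (gyr x y w)) \<and>
            (\<forall>x\<in>G. \<forall>y\<in>G. \<forall>w\<in>G. gyr (op x y) y w = gyr x y w))"

lemma gy_props: "(\<forall>x\<in>G. \<forall>y\<in>G. gyro_aut G op (gy x y)) \<and>
            (\<forall>x\<in>G. \<forall>y\<in>G. \<forall>w\<in>G. op x (op y w) = op (op x y) (gy x y w)) \<and>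
            (\<forall>x\<in>G. \<forall>y\<in>G. \<forall>w\<in>G. gy (op x y) y w = gy x y w)"
  using someI_ex[OF conjunct2[OF conjunct2[OF conjunct2[OF GG]]]] unfolding gy_def[symmetric] .

lemma gy_aut: "x \<in> G \<Longrightarrow> y \<in> G \<Longrightarrow> gyro_aut G op (gy x y)"
  and gy_assoc: "x \<in> G \<Longrightarrow> y \<in> G \<Longrightarrow> w \<in> G \<Longrightarrow> op x (op y w) = op (op x y) (gy x y w)"
  and gy_loop: "x \<in> G \<Longrightarrow> y \<in> G \<Longrightarrow> w \<in> G \<Longrightarrow> gy (op x y) y w = gy x y w"
  using gy_props by blast+

lemma gy_in: "x \<in> G \<Longrightarrow> y \<in> G \<Longrightarrow> w \<in> G \<Longrightarrow> gy x y w \<in> G"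
  using gy_aut unfolding gyro_aut_def by (meson bij_betw_apply)

lemma gy_inj: "x \<in> G \<Longrightarrow> y \<in> G \<Longrightarrow> u \<in> G \<Longrightarrow> v \<in> G \<Longrightarrow> gy x y u = gy x y v \<Longrightarrow> u = v"
  using gy_aut unfolding gyro_aut_def by (meson bij_betw_imp_inj_on inj_onD)

lemma lc_gy: "a \<in> G \<Longrightarrow> x \<in> G \<Longrightarrow> op (iv a) (op a x) = gy (iv a) a x"
  using gy_assoc[of "iv a" a x] ivl zl gy_in iv_in by simp

lemma cancel: "a \<in> G \<Longrightarrow> x \<in> G \<Longrightarrow> y \<in> G \<Longrightarrow> op a x = op a y \<Longrightarrow> x = y"
  using lc_gy[of a x] lc_gy[of a y] gy_inj[of "iv a" a x y] iv_in by simp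

lemma gy_zero_left: "a \<in> G \<Longrightarrow> w \<in> G \<Longrightarrow> gy z a w = w"
proof -
  assume a: "a \<in> G" and w: "w \<in> G"
  have "op a w = op z (op a w)" using zl closed a w by simp
  also have "\<dots> = op (op z a) (gy z a w)" using gy_assoc z_in a w by simp
  also have "\<dots> = op a (gy z a w)" using zl a by simp
  finally show ?thesis using cancel[of a w "gy z a w"] a w gy_in z_in by simp
qed

lemma lcan: "a \<in> G \<Longrightarrow> b \<in> G \<Longrightarrow> op (iv a) (op a b) = b"
proof -
  assume a: "a \<in> G" and b: "b \<in> G"
  have "op (iv a) (op a b) = gy (iv a) a b" using lc_gy a b by simp
  also have "\<dots> = gy (op (iv a) a) a b" using gy_loop[of "iv a" a b] a b iv_in by simp
  also have "\<dots> = b" using ivl a gy_zero_left b by simp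
  finally show ?thesis .
qed

lemma lcan2: "a \<in> G \<Longrightarrow> b \<in> G \<Longrightarrow> op a (op (iv a) b) = b"
proof -
  assume a: "a \<in> G" and b: "b \<in> G"
  have "op (iv a) (op a (op (iv a) b)) = op (iv a) b" using lcan[of a "op (iv a) b"] a b iv_in closed by simp
  then show ?thesis using cancel[of "iv a" "op a (op (iv a) b)" b] a b iv_in closed by simp
qed

lemma iv_zero: "iv z = z"
  using inv_unique[of z z] z_in zl by simp

lemma neq: "a \<in> G \<Longrightarrow> b \<in> G \<Longrightarrow> a \<noteq> b \<Longrightarrow> op (iv b) a \<noteq> z"
  using lcan2[of b a] zr by auto

lemma aut_zero: "gyro_aut G op \<phi> \<Longrightarrow> \<phi> z = z"
proof -
  assume ph: "gyro_aut G op \<phi>"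
  then have pz: "\<phi> z \<in> G" unfolding gyro_aut_def using z_in by (meson bij_betw_apply)
  have "op (\<phi> z) (\<phi> z) = \<phi> (op z z)" using ph z_in unfolding gyro_aut_def by simp
  also have "\<dots> = \<phi> z" using zl z_in by simp
  also have "\<dots> = op (\<phi> z) z" using zr pz by simp
  finally show ?thesis using cancel pz z_in by blast
qed

end


lemma finite_nbhd_choice:
  assumes "finite A" "z \<in> topspace T"
    and "\<forall>a\<in>A. \<exists>W. openin T W \<and> z \<in> W \<and> P a W"
    and "\<And>a W W'. W' \<subseteq> W \<Longrightarrow> P a W \<Longrightarrow> P a W'"
  shows "\<exists>W. openin T W \<and> z \<in> W \<and> (\<forall>a\<in>A. P a W)"
  using assms(1,3)
proof (induction A rule: finite_induct)
  case empty
  then show ?case using assms(2) by auto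
next
  case (insert x F)
  then obtain W where W: "openin T W" "z \<in> W" "\<forall>a\<in>F. P a W" by blast
  obtain W' where W': "openin T W'" "z \<in> W'" "P x W'" using insert.prems by blast
  have "\<forall>a\<in>insert x F. P a (W \<inter> W')"
    using W(3) W'(3) assms(4) by (metis inf_le1 inf_le2 insert_iff)
  then show ?case using W W' by blast
qed

locale tgg =
  fixes T :: "'a topology" and op :: "'a \<Rightarrow> 'a \<Rightarrow> 'a"
  assumes tg: "topological_gyrogroup T op"
begin

sublocale gg "topspace T" op
  using tg unfolding topological_gyrogroup_def by unfold_locales blast

lemma t1: "t1_space T" using tg unfolding topological_gyrogroup_def by blast
lemma opc: "continuous_map (prod_topology T T) T (\<lambda>(x, y). op x y)"
  using tg unfolding topological_gyrogroup_def by blast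
lemma ivc: "continuous_map T T iv"
  using tg unfolding topological_gyrogroup_def by blast

lemma cop: "continuous_map X T p \<Longrightarrow> continuous_map X T q \<Longrightarrow> continuous_map X T (\<lambda>x. op (p x) (q x))"
  using continuous_map_compose[OF continuous_map_pairedI opc, of X p q] by (simp add: o_def)

lemma civ: "continuous_map X T p \<Longrightarrow> continuous_map X T (\<lambda>x. iv (p x))"
  using continuous_map_compose[OF _ ivc, of X p] by (simp add: o_def)

lemma cconst: "c \<in> topspace T \<Longrightarrow> continuous_map X T (\<lambda>x. c)"
  by simp

lemma preimage_open:
  assumes "continuous_map X T \<Phi>" "openin T V"
  shows "openin X {x \<in> topspace X. \<Phi> x \<in> V}"
  using assms unfolding continuous_map_def by blast

lemma P1:
  assumes a: "a \<in> topspace T" and b: "b \<in> topspace T" and V: "openin T V" and ab: "op (iv a) b \<in> V"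
  shows "\<exists>W. openin T W \<and> z \<in> W \<and> (\<forall>u\<in>topspace T. op (iv b) u \<in> W \<longrightarrow> op (iv a) u \<in> V)"
proof -
  define W where "W = {x \<in> topspace T. op (iv a) (op b x) \<in> V}"
  have c: "continuous_map T T (\<lambda>x. op (iv a) (op b x))"
    by (intro cop cconst continuous_map_id[unfolded id_def] iv_in a b)
  have "openin T W" unfolding W_def by (rule preimage_open[OF c V])
  moreover have "z \<in> W" unfolding W_def using z_in zr b ab by simp
  moreover have "\<forall>u\<in>topspace T. op (iv b) u \<in> W \<longrightarrow> op (iv a) u \<in> V"
    unfolding W_def using lcan2 b by simp
  ultimately show ?thesis by blast
qed

lemma prod_nbhd:
  assumes "openin (prod_topology T T) Ob" "(z, z) \<in> Ob"
  shows "\<exists>W. openin T W \<and> z \<in> W \<and> W \<times> W \<subseteq> Ob"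
proof -
  obtain U1 U2 where U: "openin T U1" "openin T U2" "z \<in> U1" "z \<in> U2" "U1 \<times> U2 \<subseteq> Ob"
    using assms openin_prod_topology_alt by metis
  then have "openin T (U1 \<inter> U2)" "z \<in> U1 \<inter> U2" "(U1 \<inter> U2) \<times> (U1 \<inter> U2) \<subseteq> Ob" by auto
  then show ?thesis by blast
qed

lemma P2:
  assumes a: "a \<in> topspace T" and b: "b \<in> topspace T" and V: "openin T V" "z \<in> V"
  shows "\<exists>W. openin T W \<and> z \<in> W \<and> (\<forall>u\<in>topspace T. \<forall>v\<in>topspace T.
           op (iv a) u \<in> W \<longrightarrow> op (iv b) v \<in> W \<longrightarrow> op (iv (op a b)) (op u v) \<in> V)"
proof -
  define \<Phi> where "\<Phi> = (\<lambda>p. op (iv (op a b)) (op (op a (fst p)) (op b (snd p))))"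
  have c: "continuous_map (prod_topology T T) T \<Phi>"
    unfolding \<Phi>_def by (intro cop cconst continuous_map_fst continuous_map_snd iv_in closed a b)
  define Ob where "Ob = {p \<in> topspace (prod_topology T T). \<Phi> p \<in> V}"
  have "openin (prod_topology T T) Ob" unfolding Ob_def by (rule preimage_open[OF c V(1)])
  moreover have "(z, z) \<in> Ob" unfolding Ob_def \<Phi>_def using z_in zr a b closed ivl V(2) by simp
  ultimately obtain W where W: "openin T W" "z \<in> W" "W \<times> W \<subseteq> Ob" using prod_nbhd by blast
  have "op (iv (op a b)) (op u v) \<in> V" if u: "u \<in> topspace T" and v: "v \<in> topspace T"
    and h: "op (iv a) u \<in> W" "op (iv b) v \<in> W" for u v
  proof -
    have "(op (iv a) u, op (iv b) v) \<in> Ob" using W(3) h by blast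
    then show ?thesis unfolding Ob_def \<Phi>_def using lcan2 a b u v by simp
  qed
  then show ?thesis using W by blast
qed

lemma P3:
  assumes a: "a \<in> topspace T" and V: "openin T V" "z \<in> V"
  shows "\<exists>W. openin T W \<and> z \<in> W \<and> (\<forall>u\<in>topspace T. op (iv a) u \<in> W \<longrightarrow> op (iv (iv a)) (iv u) \<in> V)"
proof -
  define W where "W = {x \<in> topspace T. op (iv (iv a)) (iv (op a x)) \<in> V}"
  have c: "continuous_map T T (\<lambda>x. op (iv (iv a)) (iv (op a x)))"
    by (intro cop civ cconst continuous_map_id[unfolded id_def] iv_in a)
  have "openin T W" unfolding W_def by (rule preimage_open[OF c V(1)])
  moreover have "z \<in> W" unfolding W_def using z_in zr a ivl iv_in V(2) by simp
  moreover have "\<forall>u\<in>topspace T. op (iv a) u \<in> W \<longrightarrow> op (iv (iv a)) (iv u) \<in> V"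
    unfolding W_def using lcan2 a by simp
  ultimately show ?thesis by blast
qed

lemma P4:
  assumes a: "a \<in> topspace T" and b: "b \<in> topspace T" and ab: "a \<noteq> b"
  shows "\<exists>W. openin T W \<and> z \<in> W \<and> (\<forall>u\<in>topspace T. \<not> (op (iv a) u \<in> W \<and> op (iv b) u \<in> W))"
proof -
  define \<Psi> where "\<Psi> = (\<lambda>p. op (iv (snd p)) (op (iv b) (op a (fst p))))"
  have c: "continuous_map (prod_topology T T) T \<Psi>"
    unfolding \<Psi>_def by (intro cop civ cconst continuous_map_fst continuous_map_snd iv_in a b)
  have V: "openin T (topspace T - {z})" by (rule t1_space_openin_delete_alt[THEN iffD1, OF t1, rule_format]) simp
  define Ob where "Ob = {p \<in> topspace (prod_topology T T). \<Psi> p \<in> topspace T - {z}}"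
  have "openin (prod_topology T T) Ob" unfolding Ob_def by (rule preimage_open[OF c V])
  moreover have "(z, z) \<in> Ob" unfolding Ob_def \<Psi>_def
    using z_in zr zl a b closed iv_in iv_zero neq[OF a b ab] by simp
  ultimately obtain W where W: "openin T W" "z \<in> W" "W \<times> W \<subseteq> Ob" using prod_nbhd by blast
  have "\<not> (op (iv a) u \<in> W \<and> op (iv b) u \<in> W)" if u: "u \<in> topspace T" for u
  proof
    assume h: "op (iv a) u \<in> W \<and> op (iv b) u \<in> W"
    then have "(op (iv a) u, op (iv b) u) \<in> Ob" using W(3) by blast
    then show False unfolding Ob_def \<Psi>_def using lcan2 a b u ivl iv_in closed by simp
  qed
  then show ?thesis using W by blast
qed

end


definition bad :: "'a set \<Rightarrow> ('a \<Rightarrow> 'a \<Rightarrow> 'a) \<Rightarrow> (real \<Rightarrow> 'a) \<Rightarrow> 'a set \<Rightarrow> (real \<Rightarrow> 'a) \<Rightarrow> real set" where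
  "bad G op f V u = {r\<in>{0..<1}. op (ginv G op (f r)) (u r) \<notin> V}"

definition Nb :: "'a set \<Rightarrow> ('a \<Rightarrow> 'a \<Rightarrow> 'a) \<Rightarrow> (real \<Rightarrow> 'a) \<Rightarrow> 'a set \<Rightarrow> real \<Rightarrow> (real \<Rightarrow> 'a) set" where
  "Nb G op f V \<epsilon> = {u \<in> stepfuns G op. measure lebesgue (bad G op f V u) < \<epsilon>}"

definition openS :: "'a topology \<Rightarrow> ('a \<Rightarrow> 'a \<Rightarrow> 'a) \<Rightarrow> (real \<Rightarrow> 'a) set \<Rightarrow> bool" where
  "openS T op U \<longleftrightarrow> U \<subseteq> stepfuns (topspace T) op \<and>
     (\<forall>f\<in>U. \<exists>V \<epsilon>. openin T V \<and> gzero (topspace T) op \<in> V \<and> \<epsilon> > 0 \<and> Nb (topspace T) op f V \<epsilon> \<subseteq> U)"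

lemma meas_sub2:
  assumes "X \<subseteq> Y1 \<union> Y2" "X \<in> lmeasurable" "Y1 \<in> lmeasurable" "Y2 \<in> lmeasurable"
  shows "measure lebesgue X \<le> measure lebesgue Y1 + measure lebesgue Y2"
proof -
  have "measure lebesgue X \<le> measure lebesgue (Y1 \<union> Y2)"
    by (rule measure_mono_fmeasurable[OF assms(1) fmeasurableD[OF assms(2)] fmeasurable.Un[OF assms(3,4)]])
  also have "\<dots> \<le> measure lebesgue Y1 + measure lebesgue Y2"
    by (rule measure_Un_le[OF fmeasurableD[OF assms(3)] fmeasurableD[OF assms(4)]])
  finally show ?thesis .
qed

context tgg
begin

abbreviation "S \<equiv> stepfuns (topspace T) op"
abbreviation "N \<equiv> Nb (topspace T) op"
abbreviation "B \<equiv> bad (topspace T) op"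
abbreviation "zf \<equiv> (\<lambda>r::real. z)"

lemma sval: "f \<in> S \<Longrightarrow> f r \<in> topspace T"
  using stepfuns_in[of f "topspace T" op r] stepfuns_out[of f "topspace T" op r] z_in by (cases "r \<in> {0..<1}") auto

lemma sop: "f \<in> S \<Longrightarrow> g \<in> S \<Longrightarrow> stepop op f g \<in> S"
  unfolding stepop_def by (rule step_comb2) (use closed zl z_in in auto)

lemma siv: "f \<in> S \<Longrightarrow> (\<lambda>r. iv (f r)) \<in> S"
  by (rule step_comb1) (use iv_in iv_zero in auto)

lemma sz: "zf \<in> S" by (rule step_const[OF z_in])

lemma sdiff: "f \<in> S \<Longrightarrow> u \<in> S \<Longrightarrow> (\<lambda>r. op (iv (f r)) (u r)) \<in> S"
  by (rule step_comb2[where F="\<lambda>x y. op (iv x) y"]) (use closed iv_in iv_zero zl z_in in auto)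

lemma bad_meas: "f \<in> S \<Longrightarrow> u \<in> S \<Longrightarrow> B f V u \<in> lmeasurable"
  unfolding bad_def using stepfuns_meas[OF sdiff, of f u "\<lambda>x. x \<notin> V"] by simp

lemma Nmono: "f \<in> S \<Longrightarrow> V' \<subseteq> V \<Longrightarrow> \<epsilon>' \<le> \<epsilon> \<Longrightarrow> N f V' \<epsilon>' \<subseteq> N f V \<epsilon>"
proof
  fix u assume f: "f \<in> S" and V: "V' \<subseteq> V" and e: "\<epsilon>' \<le> \<epsilon>" and u: "u \<in> N f V' \<epsilon>'"
  have uS: "u \<in> S" using u unfolding Nb_def by simp
  have "B f V u \<subseteq> B f V' u" using V unfolding bad_def by auto
  then have "measure lebesgue (B f V u) \<le> measure lebesgue (B f V' u)"
    by (rule measure_mono_fmeasurable) (use bad_meas[OF f uS] in auto)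
  then show "u \<in> N f V \<epsilon>" using u e unfolding Nb_def by simp
qed

lemma Nself: "f \<in> S \<Longrightarrow> z \<in> V \<Longrightarrow> \<epsilon> > 0 \<Longrightarrow> f \<in> N f V \<epsilon>"
proof -
  assume f: "f \<in> S" and V: "z \<in> V" and e: "\<epsilon> > 0"
  have "B f V f = {}" unfolding bad_def using ivl sval[OF f] V by auto
  then show ?thesis using f e unfolding Nb_def by simp
qed

lemma NsubS: "N f V \<epsilon> \<subseteq> S" unfolding Nb_def by auto

lemma fin_pairs: "f \<in> S \<Longrightarrow> g \<in> S \<Longrightarrow> finite (f ` {0..<1} \<times> g ` {0..<1})"
  using stepfuns_finite_img by blast

lemma Nstep:
  assumes f: "f \<in> S" and g: "g \<in> N f V \<epsilon>" and V: "openin T V"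
  shows "\<exists>W \<delta>. openin T W \<and> z \<in> W \<and> \<delta> > 0 \<and> N g W \<delta> \<subseteq> N f V \<epsilon>"
proof -
  have gS: "g \<in> S" using g unfolding Nb_def by simp
  define A where "A = {p \<in> f ` {0..<1} \<times> g ` {0..<1}. op (iv (fst p)) (snd p) \<in> V}"
  have finA: "finite A" unfolding A_def using fin_pairs[OF f gS] by simp
  have "\<exists>W. openin T W \<and> z \<in> W \<and> (\<forall>p\<in>A. \<forall>u\<in>topspace T. op (iv (snd p)) u \<in> W \<longrightarrow> op (iv (fst p)) u \<in> V)"
  proof (rule finite_nbhd_choice[OF finA z_in, where P="\<lambda>p W. \<forall>u\<in>topspace T. op (iv (snd p)) u \<in> W \<longrightarrow> op (iv (fst p)) u \<in> V"])
    show "\<forall>p\<in>A. \<exists>W. openin T W \<and> z \<in> W \<and> (\<forall>u\<in>topspace T. op (iv (snd p)) u \<in> W \<longrightarrow> op (iv (fst p)) u \<in> V)"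
    proof
      fix p assume "p \<in> A"
      then have "fst p \<in> topspace T" "snd p \<in> topspace T" "op (iv (fst p)) (snd p) \<in> V"
        unfolding A_def using sval f gS by auto
      then show "\<exists>W. openin T W \<and> z \<in> W \<and> (\<forall>u\<in>topspace T. op (iv (snd p)) u \<in> W \<longrightarrow> op (iv (fst p)) u \<in> V)"
        using P1 V by blast
    qed
  qed blast
  then obtain W where W: "openin T W" "z \<in> W"
    and WP: "\<forall>p\<in>A. \<forall>u\<in>topspace T. op (iv (snd p)) u \<in> W \<longrightarrow> op (iv (fst p)) u \<in> V" by blast
  define m0 where "m0 = measure lebesgue (B f V g)"
  have m0: "m0 < \<epsilon>" using g unfolding Nb_def m0_def by simp
  have "N g W (\<epsilon> - m0) \<subseteq> N f V \<epsilon>"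
  proof
    fix u assume u: "u \<in> N g W (\<epsilon> - m0)"
    then have uS: "u \<in> S" unfolding Nb_def by simp
    have sub: "B f V u \<subseteq> B f V g \<union> B g W u"
    proof
      fix r assume r: "r \<in> B f V u"
      show "r \<in> B f V g \<union> B g W u"
      proof (rule ccontr)
        assume "r \<notin> B f V g \<union> B g W u"
        then have h1: "op (iv (f r)) (g r) \<in> V" and h2: "op (iv (g r)) (u r) \<in> W"
          using r unfolding bad_def by auto
        have "(f r, g r) \<in> A" unfolding A_def using h1 r unfolding bad_def by auto
        then have "op (iv (f r)) (u r) \<in> V" using WP h2 sval[OF uS] by fastforce
        then show False using r unfolding bad_def by simp
      qed
    qed
    have "measure lebesgue (B f V u) \<le> measure lebesgue (B f V g) + measure lebesgue (B g W u)"
      by (rule meas_sub2[OF sub]) (use bad_meas f gS uS in auto)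
    also have "\<dots> < \<epsilon>" using u unfolding Nb_def m0_def by simp
    finally show "u \<in> N f V \<epsilon>" using uS unfolding Nb_def by simp
  qed
  then show ?thesis using W m0 by (intro exI[of _ W] exI[of _ "\<epsilon> - m0"]) auto
qed

lemma istop: "istopology (openS T op)"
  unfolding istopology_def
proof (intro conjI allI impI)
  fix U1 U2 assume U1: "openS T op U1" and U2: "openS T op U2"
  show "openS T op (U1 \<inter> U2)"
    unfolding openS_def
  proof (intro conjI ballI)
    show "U1 \<inter> U2 \<subseteq> S" using U1 unfolding openS_def by auto
    fix f assume f: "f \<in> U1 \<inter> U2"
    then have fS: "f \<in> S" using U1 unfolding openS_def by auto
    obtain V1 e1 where 1: "openin T V1" "z \<in> V1" "e1 > 0" "N f V1 e1 \<subseteq> U1"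
      using U1 f unfolding openS_def by blast
    obtain V2 e2 where 2: "openin T V2" "z \<in> V2" "e2 > 0" "N f V2 e2 \<subseteq> U2"
      using U2 f unfolding openS_def by blast
    have "N f (V1 \<inter> V2) (min e1 e2) \<subseteq> N f V1 e1" "N f (V1 \<inter> V2) (min e1 e2) \<subseteq> N f V2 e2"
      using Nmono[OF fS] by auto
    then show "\<exists>V \<epsilon>. openin T V \<and> z \<in> V \<and> \<epsilon> > 0 \<and> N f V \<epsilon> \<subseteq> U1 \<inter> U2"
      using 1 2 by (intro exI[of _ "V1 \<inter> V2"] exI[of _ "min e1 e2"]) auto
  qed
next
  fix K assume K: "\<forall>U\<in>K. openS T op U"
  show "openS T op (\<Union>K)"
    unfolding openS_def
  proof (intro conjI ballI)
    show "\<Union>K \<subseteq> S" using K unfolding openS_def by auto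
    fix f assume "f \<in> \<Union>K"
    then obtain U where U: "U \<in> K" "f \<in> U" by blast
    then have "openS T op U" using K by blast
    then obtain V \<epsilon> where "openin T V \<and> z \<in> V \<and> \<epsilon> > 0 \<and> N f V \<epsilon> \<subseteq> U"
      using U(2) unfolding openS_def by blast
    then show "\<exists>V \<epsilon>. openin T V \<and> z \<in> V \<and> \<epsilon> > 0 \<and> N f V \<epsilon> \<subseteq> \<Union>K" using U by blast
  qed
qed

definition "Tp = topology (openS T op)"

lemma openin_Tp: "openin Tp = openS T op"
  unfolding Tp_def using istop by simp

lemma N_open:
  assumes f: "f \<in> S" and V: "openin T V"
  shows "openin Tp (N f V \<epsilon>)"
  unfolding openin_Tp openS_def
proof (intro conjI ballI)
  show "N f V \<epsilon> \<subseteq> S" by (rule NsubS)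
  fix g assume g: "g \<in> N f V \<epsilon>"
  obtain W \<delta> where "openin T W" "z \<in> W" "\<delta> > 0" "N g W \<delta> \<subseteq> N f V \<epsilon>"
    using Nstep[OF f g V] by blast
  then show "\<exists>W \<delta>. openin T W \<and> z \<in> W \<and> \<delta> > 0 \<and> N g W \<delta> \<subseteq> N f V \<epsilon>" by blast
qed

lemma S_open: "openS T op S"
  unfolding openS_def
proof (intro conjI ballI)
  fix f assume "f \<in> S"
  have "openin T (topspace T)" by simp
  moreover have "N f (topspace T) 1 \<subseteq> S" by (rule NsubS)
  ultimately show "\<exists>V \<epsilon>. openin T V \<and> z \<in> V \<and> \<epsilon> > 0 \<and> N f V \<epsilon> \<subseteq> S" using z_in
    by (intro exI[of _ "topspace T"] exI[of _ "1::real"]) simp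
qed simp

lemma topspace_Tp: "topspace Tp = S"
proof
  show "topspace Tp \<subseteq> S" unfolding topspace_def openin_Tp openS_def by blast
  show "S \<subseteq> topspace Tp" using S_open openin_subset unfolding openin_Tp[symmetric] by blast
qed

end


context tgg
begin

lemma Nimg:
  assumes f: "f \<in> S"
  shows "stepop op f ` Onbhd (topspace T) op V \<epsilon> = N f V \<epsilon>"
proof (intro equalityI subsetI)
  fix u assume "u \<in> stepop op f ` Onbhd (topspace T) op V \<epsilon>"
  then obtain w where w: "w \<in> S" "measure lebesgue {r\<in>{0..<1}. w r \<notin> V} < \<epsilon>" "u = stepop op f w"
    unfolding Onbhd_def by blast
  have "B f V u = {r\<in>{0..<1}. w r \<notin> V}"
    unfolding bad_def w(3) stepop_def using lcan sval[OF f] sval[OF w(1)] by simp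
  then show "u \<in> N f V \<epsilon>" unfolding Nb_def using sop[OF f w(1)] w by simp
next
  fix u assume u: "u \<in> N f V \<epsilon>"
  then have uS: "u \<in> S" unfolding Nb_def by simp
  define w where "w = (\<lambda>r. op (iv (f r)) (u r))"
  have wS: "w \<in> S" unfolding w_def by (rule sdiff[OF f uS])
  have "stepop op f w = u" unfolding stepop_def w_def
    by (rule ext) (simp add: lcan2 sval[OF f] sval[OF uS])
  moreover have "{r\<in>{0..<1}. w r \<notin> V} = B f V u" unfolding w_def bad_def by simp
  then have "w \<in> Onbhd (topspace T) op V \<epsilon>" unfolding Onbhd_def using wS u unfolding Nb_def by simp
  ultimately show "u \<in> stepop op f ` Onbhd (topspace T) op V \<epsilon>" by (metis rev_image_eqI)
qed

lemma local_base:
  assumes f: "f \<in> S"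
  shows "local_base_at Tp {stepop op f ` Onbhd (topspace T) op V \<epsilon> | V \<epsilon>. openin T V \<and> z \<in> V \<and> \<epsilon> > 0} f"
  unfolding local_base_at_def
proof (intro conjI ballI allI impI)
  fix Bs assume "Bs \<in> {stepop op f ` Onbhd (topspace T) op V \<epsilon> | V \<epsilon>. openin T V \<and> z \<in> V \<and> \<epsilon> > 0}"
  then obtain V \<epsilon> where V: "Bs = stepop op f ` Onbhd (topspace T) op V \<epsilon>" "openin T V" "z \<in> V" "\<epsilon> > 0"
    by blast
  then have "Bs = N f V \<epsilon>" using Nimg[OF f] by simp
  then show "openin Tp Bs" "f \<in> Bs" using N_open[OF f V(2)] Nself[OF f V(3,4)] by simp_all
next
  fix U assume "openin Tp U \<and> f \<in> U"
  then have "openS T op U" "f \<in> U" unfolding openin_Tp by auto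
  then obtain V \<epsilon> where V: "openin T V" "z \<in> V" "\<epsilon> > 0" "N f V \<epsilon> \<subseteq> U"
    unfolding openS_def by blast
  have "stepop op f ` Onbhd (topspace T) op V \<epsilon> \<in> {stepop op f ` Onbhd (topspace T) op V \<epsilon> | V \<epsilon>. openin T V \<and> z \<in> V \<and> \<epsilon> > 0}"
    using V by blast
  moreover have "stepop op f ` Onbhd (topspace T) op V \<epsilon> \<subseteq> U" using V(4) Nimg[OF f] by simp
  ultimately show "\<exists>Bs\<in>{stepop op f ` Onbhd (topspace T) op V \<epsilon> | V \<epsilon>. openin T V \<and> z \<in> V \<and> \<epsilon> > 0}. Bs \<subseteq> U"
    by blast
qed

lemma haus: "Hausdorff_space Tp"
  unfolding Hausdorff_space_def topspace_Tp
proof (intro allI impI)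
  fix f g assume "f \<in> S \<and> g \<in> S \<and> f \<noteq> g"
  then have f: "f \<in> S" and g: "g \<in> S" and fg: "f \<noteq> g" by auto
  define h where "h = (\<lambda>r. op (iv (f r)) (g r))"
  have hS: "h \<in> S" unfolding h_def by (rule sdiff[OF f g])
  obtain r0 where r0: "f r0 \<noteq> g r0" using fg by (meson ext)
  have r01: "r0 \<in> {0..<1}"
    using r0 stepfuns_out[OF f, of r0] stepfuns_out[OF g, of r0] by metis
  have hr0: "h r0 \<noteq> z" unfolding h_def using neq[of "g r0" "f r0"] sval[OF f] sval[OF g] r0 by metis
  define D where "D = {r\<in>{0..<1}. h r \<noteq> z}"
  have Dm: "D \<in> lmeasurable" unfolding D_def by (rule stepfuns_meas[OF hS])
  define m where "m = measure lebesgue D"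
  have mpos: "m > 0" unfolding m_def D_def by (rule stepfuns_pos[OF hS r01]) (rule hr0)
  define A where "A = {p \<in> f ` {0..<1} \<times> g ` {0..<1}. fst p \<noteq> snd p}"
  have finA: "finite A" unfolding A_def using fin_pairs[OF f g] by simp
  have "\<exists>W. openin T W \<and> z \<in> W \<and> (\<forall>p\<in>A. \<forall>u\<in>topspace T. \<not> (op (iv (fst p)) u \<in> W \<and> op (iv (snd p)) u \<in> W))"
  proof (rule finite_nbhd_choice[OF finA z_in, where P="\<lambda>p W. \<forall>u\<in>topspace T. \<not> (op (iv (fst p)) u \<in> W \<and> op (iv (snd p)) u \<in> W)"])
    show "\<forall>p\<in>A. \<exists>W. openin T W \<and> z \<in> W \<and> (\<forall>u\<in>topspace T. \<not> (op (iv (fst p)) u \<in> W \<and> op (iv (snd p)) u \<in> W))"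
    proof
      fix p assume "p \<in> A"
      then have "fst p \<in> topspace T" "snd p \<in> topspace T" "fst p \<noteq> snd p"
        unfolding A_def using sval f g by auto
      then show "\<exists>W. openin T W \<and> z \<in> W \<and> (\<forall>u\<in>topspace T. \<not> (op (iv (fst p)) u \<in> W \<and> op (iv (snd p)) u \<in> W))"
        using P4 by blast
    qed
  qed blast
  then obtain W where W: "openin T W" "z \<in> W"
    and WP: "\<forall>p\<in>A. \<forall>u\<in>topspace T. \<not> (op (iv (fst p)) u \<in> W \<and> op (iv (snd p)) u \<in> W)" by blast
  have m2: "m / 2 > 0" using mpos by simp
  have "disjnt (N f W (m/2)) (N g W (m/2))"
    unfolding disjnt_iff
  proof (intro allI notI)
    fix u assume u: "u \<in> N f W (m/2) \<and> u \<in> N g W (m/2)"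
    then have uS: "u \<in> S" unfolding Nb_def by simp
    have sub: "D \<subseteq> B f W u \<union> B g W u"
    proof
      fix r assume r: "r \<in> D"
      show "r \<in> B f W u \<union> B g W u"
      proof (rule ccontr)
        assume "r \<notin> B f W u \<union> B g W u"
        then have h1: "op (iv (f r)) (u r) \<in> W" and h2: "op (iv (g r)) (u r) \<in> W"
          using r unfolding bad_def D_def by auto
        have "f r \<noteq> g r"
        proof
          assume "f r = g r"
          then have "h r = z" unfolding h_def using ivl sval[OF g] by simp
          then show False using r unfolding D_def by simp
        qed
        then have "(f r, g r) \<in> A" unfolding A_def using r unfolding D_def by auto
        then show False using WP h1 h2 sval[OF uS] by fastforce
      qed
    qed
    have "m \<le> measure lebesgue (B f W u) + measure lebesgue (B g W u)"
      unfolding m_def by (rule meas_sub2[OF sub Dm]) (use bad_meas f g uS in auto)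
    also have "\<dots> < m/2 + m/2" using u unfolding Nb_def by simp
    finally show False by simp
  qed
  then show "\<exists>U V. openin Tp U \<and> openin Tp V \<and> f \<in> U \<and> g \<in> V \<and> disjnt U V"
    using N_open[OF f W(1)] N_open[OF g W(1)] Nself[OF f W(2) m2] Nself[OF g W(2) m2] by blast
qed

end


context tgg
begin

lemma zf_ident: "a \<in> S \<Longrightarrow> stepop op zf a = a \<and> stepop op a zf = a"
  unfolding stepop_def by (simp add: fun_eq_iff zl zr sval)

lemma ident_unique: "e \<in> S \<Longrightarrow> \<forall>a\<in>S. stepop op e a = a \<and> stepop op a e = a \<Longrightarrow> e = zf"
proof -
  assume e: "e \<in> S" and id: "\<forall>a\<in>S. stepop op e a = a \<and> stepop op a e = a"
  have "e = stepop op e zf" using zf_ident[OF e] by simp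
  also have "\<dots> = zf" using id sz by blast
  finally show ?thesis .
qed

lemma ex1_S: "\<exists>!e. e \<in> S \<and> (\<forall>a\<in>S. stepop op e a = a \<and> stepop op a e = a)"
proof (rule ex1I[of _ zf])
  show "zf \<in> S \<and> (\<forall>a\<in>S. stepop op zf a = a \<and> stepop op a zf = a)" using sz zf_ident by blast
next
  fix e assume "e \<in> S \<and> (\<forall>a\<in>S. stepop op e a = a \<and> stepop op a e = a)"
  then show "e = zf" using ident_unique by blast
qed

lemma inv_S:
  assumes x: "x \<in> S"
  shows "\<exists>!y. y \<in> S \<and> stepop op y x = zf \<and> stepop op x y = zf"
proof (rule ex1I[of _ "\<lambda>r. iv (x r)"])
  show "(\<lambda>r. iv (x r)) \<in> S \<and> stepop op (\<lambda>r. iv (x r)) x = zf \<and> stepop op x (\<lambda>r. iv (x r)) = zf"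
    using siv[OF x] unfolding stepop_def by (simp add: fun_eq_iff ivl ivr sval[OF x])
next
  fix y assume y: "y \<in> S \<and> stepop op y x = zf \<and> stepop op x y = zf"
  show "y = (\<lambda>r. iv (x r))"
  proof
    fix r
    have "op (y r) (x r) = z" using fun_cong[OF conjunct1[OF conjunct2[OF y]], of r] unfolding stepop_def by simp
    moreover have "op (x r) (y r) = z" using fun_cong[OF conjunct2[OF conjunct2[OF y]], of r] unfolding stepop_def by simp
    ultimately show "y r = iv (x r)" using inv_unique[of "x r" "y r"] sval[OF x] sval[of y] y by simp
  qed
qed

definition "Gy f g = (\<lambda>h r. gy (f r) (g r) (h r))"

lemma gy_bij: "a \<in> topspace T \<Longrightarrow> b \<in> topspace T \<Longrightarrow> bij_betw (gy a b) (topspace T) (topspace T)"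
  using gy_aut unfolding gyro_aut_def by blast

lemma gy_hom: "a \<in> topspace T \<Longrightarrow> b \<in> topspace T \<Longrightarrow> u \<in> topspace T \<Longrightarrow> v \<in> topspace T \<Longrightarrow>
   gy a b (op u v) = op (gy a b u) (gy a b v)"
  using gy_aut unfolding gyro_aut_def by blast

lemma Gy_aut:
  assumes x: "x \<in> S" and y: "y \<in> S"
  shows "gyro_aut S (stepop op) (Gy x y)"
  unfolding gyro_aut_def bij_betw_def
proof (intro conjI ballI)
  show "inj_on (Gy x y) S"
  proof (rule inj_onI)
    fix h1 h2 assume h1: "h1 \<in> S" and h2: "h2 \<in> S" and eq: "Gy x y h1 = Gy x y h2"
    show "h1 = h2"
    proof
      fix r
      have "gy (x r) (y r) (h1 r) = gy (x r) (y r) (h2 r)" using fun_cong[OF eq, of r] unfolding Gy_def by simp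
      then show "h1 r = h2 r" using gy_inj sval x y h1 h2 by blast
    qed
  qed
  have zz: "gy z z z = z" using aut_zero[OF gy_aut[OF z_in z_in]] .
  show "Gy x y ` S = S"
  proof
    show "Gy x y ` S \<subseteq> S"
    proof
      fix u assume "u \<in> Gy x y ` S"
      then obtain h where h: "h \<in> S" "u = Gy x y h" by blast
      have "(\<lambda>r. gy (x r) (y r) (h r)) \<in> S"
        by (rule step_comb3[OF x y h(1)]) (use gy_in zz in auto)
      then show "u \<in> S" unfolding h(2) Gy_def .
    qed
  next
    show "S \<subseteq> Gy x y ` S"
    proof
      fix h assume h: "h \<in> S"
      define h' where "h' = (\<lambda>r. inv_into (topspace T) (gy (x r) (y r)) (h r))"
      have Fin: "\<forall>a\<in>topspace T. \<forall>b\<in>topspace T. \<forall>c\<in>topspace T. inv_into (topspace T) (gy a b) c \<in> topspace T"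
        using gy_bij bij_betw_inv_into bij_betw_apply by metis
      have Fz: "inv_into (topspace T) (gy z z) z = z"
        using inv_into_f_f[OF bij_betw_imp_inj_on[OF gy_bij[OF z_in z_in]] z_in] zz by simp
      have h'S: "h' \<in> S" unfolding h'_def
        by (rule step_comb3[OF x y h, where F="\<lambda>a b c. inv_into (topspace T) (gy a b) c"]) (use Fin Fz in auto)
      have "Gy x y h' = h" unfolding Gy_def h'_def
      proof
        fix r
        have "h r \<in> gy (x r) (y r) ` topspace T"
          using bij_betw_imp_surj_on[OF gy_bij[OF sval[OF x] sval[OF y]]] sval[OF h] by simp
        then show "gy (x r) (y r) (inv_into (topspace T) (gy (x r) (y r)) (h r)) = h r"
          by (rule f_inv_into_f)
      qed
      then show "h \<in> Gy x y ` S" using h'S by (metis rev_image_eqI)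
    qed
  qed
next
  fix a b assume a: "a \<in> S" and b: "b \<in> S"
  show "Gy x y (stepop op a b) = stepop op (Gy x y a) (Gy x y b)"
    unfolding Gy_def stepop_def
    by (rule ext) (rule gy_hom[OF sval[OF x] sval[OF y] sval[OF a] sval[OF b]])
qed

lemma S_gyro: "gyrogroup S (stepop op)"
  unfolding gyrogroup_def
proof (intro conjI)
  show "\<forall>x\<in>S. \<forall>y\<in>S. stepop op x y \<in> S" using sop by blast
  show "\<exists>!e. e \<in> S \<and> (\<forall>a\<in>S. stepop op e a = a \<and> stepop op a e = a)" by (rule ex1_S)
  show "\<forall>e\<in>S. (\<forall>a\<in>S. stepop op e a = a \<and> stepop op a e = a) \<longrightarrow>
        (\<forall>x\<in>S. \<exists>!y. y \<in> S \<and> stepop op y x = e \<and> stepop op x y = e)"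
  proof (intro ballI impI)
    fix e x assume e: "e \<in> S" and id: "\<forall>a\<in>S. stepop op e a = a \<and> stepop op a e = a" and x: "x \<in> S"
    have "e = zf" by (rule ident_unique[OF e id])
    then show "\<exists>!y. y \<in> S \<and> stepop op y x = e \<and> stepop op x y = e" using inv_S[OF x] by simp
  qed
  show "\<exists>gyr. (\<forall>x\<in>S. \<forall>y\<in>S. gyro_aut S (stepop op) (gyr x y)) \<and>
            (\<forall>x\<in>S. \<forall>y\<in>S. \<forall>w\<in>S. stepop op x (stepop op y w) = stepop op (stepop op x y) (gyr x y w)) \<and>
            (\<forall>x\<in>S. \<forall>y\<in>S. \<forall>w\<in>S. gyr (stepop op x y) y w = gyr x y w)"
  proof (intro exI[of _ Gy] conjI ballI)
    fix x y assume x: "x \<in> S" and y: "y \<in> S"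
    show "gyro_aut S (stepop op) (Gy x y)" by (rule Gy_aut[OF x y])
    fix w assume w: "w \<in> S"
    show "stepop op x (stepop op y w) = stepop op (stepop op x y) (Gy x y w)"
      unfolding stepop_def Gy_def by (rule ext) (rule gy_assoc[OF sval[OF x] sval[OF y] sval[OF w]])
    show "Gy (stepop op x y) y w = Gy x y w"
      unfolding stepop_def Gy_def by (rule ext) (rule gy_loop[OF sval[OF x] sval[OF y] sval[OF w]])
  qed
qed

lemma gzero_S: "gzero S (stepop op) = zf"
  unfolding gzero_def[of S "stepop op"] by (rule the1_equality[OF ex1_S]) (use sz zf_ident in blast)

lemma ginv_S: "x \<in> S \<Longrightarrow> ginv S (stepop op) x = (\<lambda>r. iv (x r))"
  unfolding ginv_def[of S "stepop op" x] gzero_S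
  by (rule the1_equality[OF inv_S]) (use siv ivl ivr sval in \<open>auto simp: stepop_def fun_eq_iff\<close>)

end


context tgg
begin

lemma cont_op: "continuous_map (prod_topology Tp Tp) Tp (\<lambda>(x, y). stepop op x y)"
  unfolding continuous_map_def topspace_prod_topology topspace_Tp
proof (intro conjI allI impI)
  show "(\<lambda>(x, y). stepop op x y) \<in> S \<times> S \<rightarrow> S" using sop by auto
  fix U assume U: "openin Tp U"
  show "openin (prod_topology Tp Tp) {p \<in> S \<times> S. (\<lambda>(x, y). stepop op x y) p \<in> U}"
    unfolding openin_prod_topology_alt
  proof (intro allI impI)
    fix f g assume "(f, g) \<in> {p \<in> S \<times> S. (\<lambda>(x, y). stepop op x y) p \<in> U}"
    then have f: "f \<in> S" and g: "g \<in> S" and fg: "stepop op f g \<in> U" by auto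
    have "openS T op U" using U unfolding openin_Tp .
    then obtain V \<epsilon> where V: "openin T V" "z \<in> V" "\<epsilon> > 0" "N (stepop op f g) V \<epsilon> \<subseteq> U"
      using fg unfolding openS_def by blast
    define A where "A = f ` {0..<1} \<times> g ` {0..<1}"
    have finA: "finite A" unfolding A_def using fin_pairs[OF f g] by simp
    define P where "P = (\<lambda>p W. \<forall>u\<in>topspace T. \<forall>v\<in>topspace T.
           op (iv (fst p)) u \<in> W \<longrightarrow> op (iv (snd p)) v \<in> W \<longrightarrow> op (iv (op (fst p) (snd p))) (op u v) \<in> V)"
    have "\<exists>W. openin T W \<and> z \<in> W \<and> (\<forall>p\<in>A. P p W)"
    proof (rule finite_nbhd_choice[OF finA z_in])
      show "\<forall>p\<in>A. \<exists>W. openin T W \<and> z \<in> W \<and> P p W"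
      proof
        fix p assume "p \<in> A"
        then have "fst p \<in> topspace T" "snd p \<in> topspace T"
          unfolding A_def using sval f g by auto
        then show "\<exists>W. openin T W \<and> z \<in> W \<and> P p W" unfolding P_def using P2 V(1,2) by blast
      qed
    qed (unfold P_def, blast)
    then obtain W where W: "openin T W" "z \<in> W" and WP: "\<forall>p\<in>A. P p W" by blast
    have e2: "\<epsilon>/2 > 0" using V by simp
    have "N f W (\<epsilon>/2) \<times> N g W (\<epsilon>/2) \<subseteq> {p \<in> S \<times> S. (\<lambda>(x, y). stepop op x y) p \<in> U}"
    proof
      fix q assume q: "q \<in> N f W (\<epsilon>/2) \<times> N g W (\<epsilon>/2)"
      obtain u v where uv: "q = (u, v)" by fastforce
      have u: "u \<in> N f W (\<epsilon>/2)" and v: "v \<in> N g W (\<epsilon>/2)" using q uv by auto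
      then have uS: "u \<in> S" and vS: "v \<in> S" unfolding Nb_def by auto
      have wS: "stepop op u v \<in> S" by (rule sop[OF uS vS])
      have fgS: "stepop op f g \<in> S" by (rule sop[OF f g])
      have sub: "B (stepop op f g) V (stepop op u v) \<subseteq> B f W u \<union> B g W v"
      proof
        fix r assume r: "r \<in> B (stepop op f g) V (stepop op u v)"
        show "r \<in> B f W u \<union> B g W v"
        proof (rule ccontr)
          assume "r \<notin> B f W u \<union> B g W v"
          then have h1: "op (iv (f r)) (u r) \<in> W" and h2: "op (iv (g r)) (v r) \<in> W"
            using r unfolding bad_def by auto
          have "(f r, g r) \<in> A" unfolding A_def using r unfolding bad_def by auto
          then have "P (f r, g r) W" using WP by blast
          then have "op (iv (op (f r) (g r))) (op (u r) (v r)) \<in> V"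
            unfolding P_def using h1 h2 sval[OF uS] sval[OF vS] by simp
          then show False using r unfolding bad_def stepop_def by simp
        qed
      qed
      have "measure lebesgue (B (stepop op f g) V (stepop op u v)) \<le> measure lebesgue (B f W u) + measure lebesgue (B g W v)"
        by (rule meas_sub2[OF sub]) (use bad_meas fgS wS f g uS vS in auto)
      also have "\<dots> < \<epsilon>/2 + \<epsilon>/2" using u v unfolding Nb_def by simp
      finally have "stepop op u v \<in> N (stepop op f g) V \<epsilon>" unfolding Nb_def using wS by simp
      then show "q \<in> {p \<in> S \<times> S. (\<lambda>(x, y). stepop op x y) p \<in> U}" using V(4) uv uS vS by auto
    qed
    then show "\<exists>U1 U2. openin Tp U1 \<and> openin Tp U2 \<and> f \<in> U1 \<and> g \<in> U2 \<and>
        U1 \<times> U2 \<subseteq> {p \<in> S \<times> S. (\<lambda>(x, y). stepop op x y) p \<in> U}"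
      using N_open[OF f W(1)] N_open[OF g W(1)] Nself[OF f W(2) e2] Nself[OF g W(2) e2] by blast
  qed
qed

lemma cont_iv: "continuous_map Tp Tp (\<lambda>f r. iv (f r))"
  unfolding continuous_map_def topspace_Tp
proof (intro conjI allI impI)
  show "(\<lambda>f r. iv (f r)) \<in> S \<rightarrow> S" using siv by auto
  fix U assume U: "openin Tp U"
  have oU: "openS T op U" using U unfolding openin_Tp .
  show "openin Tp {f \<in> S. (\<lambda>r. iv (f r)) \<in> U}"
    unfolding openin_Tp openS_def
  proof (intro conjI ballI)
    show "{f \<in> S. (\<lambda>r. iv (f r)) \<in> U} \<subseteq> S" by auto
    fix f assume "f \<in> {f \<in> S. (\<lambda>r. iv (f r)) \<in> U}"
    then have f: "f \<in> S" and fU: "(\<lambda>r. iv (f r)) \<in> U" by auto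
    have ivfS: "(\<lambda>r. iv (f r)) \<in> S" by (rule siv[OF f])
    obtain V \<epsilon> where V: "openin T V" "z \<in> V" "\<epsilon> > 0" "N (\<lambda>r. iv (f r)) V \<epsilon> \<subseteq> U"
      using oU fU unfolding openS_def by blast
    define A where "A = f ` {0..<1}"
    have finA: "finite A" unfolding A_def using stepfuns_finite_img[OF f] .
    define P where "P = (\<lambda>a W. \<forall>u\<in>topspace T. op (iv a) u \<in> W \<longrightarrow> op (iv (iv a)) (iv u) \<in> V)"
    have "\<exists>W. openin T W \<and> z \<in> W \<and> (\<forall>a\<in>A. P a W)"
    proof (rule finite_nbhd_choice[OF finA z_in])
      show "\<forall>a\<in>A. \<exists>W. openin T W \<and> z \<in> W \<and> P a W"
      proof
        fix a assume "a \<in> A"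
        then have "a \<in> topspace T" unfolding A_def using sval f by auto
        then show "\<exists>W. openin T W \<and> z \<in> W \<and> P a W" unfolding P_def using P3 V(1,2) by blast
      qed
    qed (unfold P_def, blast)
    then obtain W where W: "openin T W" "z \<in> W" and WP: "\<forall>a\<in>A. P a W" by blast
    have "N f W \<epsilon> \<subseteq> {f \<in> S. (\<lambda>r. iv (f r)) \<in> U}"
    proof
      fix u assume u: "u \<in> N f W \<epsilon>"
      then have uS: "u \<in> S" unfolding Nb_def by auto
      have ivuS: "(\<lambda>r. iv (u r)) \<in> S" by (rule siv[OF uS])
      have sub: "B (\<lambda>r. iv (f r)) V (\<lambda>r. iv (u r)) \<subseteq> B f W u"
      proof
        fix r assume r: "r \<in> B (\<lambda>r. iv (f r)) V (\<lambda>r. iv (u r))"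
        show "r \<in> B f W u"
        proof (rule ccontr)
          assume "r \<notin> B f W u"
          then have h1: "op (iv (f r)) (u r) \<in> W" using r unfolding bad_def by auto
          have "f r \<in> A" unfolding A_def using r unfolding bad_def by auto
          then have "P (f r) W" using WP by blast
          then have "op (iv (iv (f r))) (iv (u r)) \<in> V" unfolding P_def using h1 sval[OF uS] by simp
          then show False using r unfolding bad_def by simp
        qed
      qed
      have "measure lebesgue (B (\<lambda>r. iv (f r)) V (\<lambda>r. iv (u r))) \<le> measure lebesgue (B f W u)"
        by (rule measure_mono_fmeasurable[OF sub fmeasurableD[OF bad_meas[OF ivfS ivuS]] bad_meas[OF f uS]])
      also have "\<dots> < \<epsilon>" using u unfolding Nb_def by simp
      finally have "(\<lambda>r. iv (u r)) \<in> N (\<lambda>r. iv (f r)) V \<epsilon>" unfolding Nb_def using ivuS by simp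
      then show "u \<in> {f \<in> S. (\<lambda>r. iv (f r)) \<in> U}" using V(4) uS by auto
    qed
    then show "\<exists>W \<epsilon>. openin T W \<and> z \<in> W \<and> \<epsilon> > 0 \<and> N f W \<epsilon> \<subseteq> {f \<in> S. (\<lambda>r. iv (f r)) \<in> U}"
      using W V(3) by blast
  qed
qed

lemma cont_ginv: "continuous_map Tp Tp (ginv (topspace Tp) (stepop op))"
  by (rule continuous_map_eq[OF cont_iv]) (simp add: topspace_Tp ginv_S)

lemma tg_Tp: "topological_gyrogroup Tp (stepop op)"
  unfolding topological_gyrogroup_def
  using S_gyro haus Hausdorff_imp_t1_space cont_op cont_ginv topspace_Tp by simp

end

theorem mainTheorem3:
  fixes T :: "'a topology" and op :: "'a \<Rightarrow> 'a \<Rightarrow> 'a"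
  assumes "topological_gyrogroup T op"
  shows "\<exists>T'. topspace T' = stepfuns (topspace T) op \<and>
           local_base_at T'
             {Onbhd (topspace T) op V \<epsilon> | V \<epsilon>. openin T V \<and> gzero (topspace T) op \<in> V \<and> \<epsilon> > 0}
             (gzero (stepfuns (topspace T) op) (stepop op)) \<and>
           topological_gyrogroup T' (stepop op) \<and>
           Hausdorff_space T' \<and>
           (\<forall>f\<in>stepfuns (topspace T) op.
              local_base_at T'
                {stepop op f ` Onbhd (topspace T) op V \<epsilon> | V \<epsilon>.
                   openin T V \<and> gzero (topspace T) op \<in> V \<and> \<epsilon> > 0} f)"
proof -
  interpret tgg T op by (rule tgg.intro[OF assms])
  have img: "stepop op zf ` Onbhd (topspace T) op V \<epsilon> = Onbhd (topspace T) op V \<epsilon>" for V \<epsilon>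
  proof -
    have "stepop op zf w = w" if "w \<in> Onbhd (topspace T) op V \<epsilon>" for w
      using zf_ident[of w] that unfolding Onbhd_def by simp
    then show ?thesis by simp
  qed
  have fam: "{Onbhd (topspace T) op V \<epsilon> | V \<epsilon>. openin T V \<and> z \<in> V \<and> \<epsilon> > 0}
     = {stepop op zf ` Onbhd (topspace T) op V \<epsilon> | V \<epsilon>. openin T V \<and> z \<in> V \<and> \<epsilon> > 0}"
    unfolding img ..
  show ?thesis
  proof (intro exI[of _ Tp] conjI)
    show "topspace Tp = S" by (rule topspace_Tp)
    show "local_base_at Tp {Onbhd (topspace T) op V \<epsilon> | V \<epsilon>. openin T V \<and> z \<in> V \<and> \<epsilon> > 0}
        (gzero S (stepop op))"
      unfolding gzero_S fam by (rule local_base[OF sz])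
    show "topological_gyrogroup Tp (stepop op)" by (rule tg_Tp)
    show "Hausdorff_space Tp" by (rule haus)
    show "\<forall>f\<in>S. local_base_at Tp {stepop op f ` Onbhd (topspace T) op V \<epsilon> | V \<epsilon>.
                   openin T V \<and> z \<in> V \<and> \<epsilon> > 0} f"
      using local_base by blast
  qed
qed


end
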